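(* Let $q$ be a prime power, $m\ge1$, $j\ge1$, let $G\in GF(q^m)[x]$ be a separable polynomial of degree $\tau$ with factorization $G(x)=\prod_{i=1}^{\tau}(x-\beta_i)$, the $\beta_i$ lying in some finite extension field of $GF(q^m)$, and let $L=\{\alpha_1,\dots,\alpha_n\}\subseteq GF(q^m)$ with $G(\alpha_k)\ne 0$ for all $k$. Then the cumulative-separable code $\Gamma(L,G^j)$ equals the intersection (common subcode) of the cumulative codes $\Gamma(L,(x-\beta_i)^j)$, $i=1,\dots,\tau$.
   Context: For a set $L=\{\alpha_1,\dots,\alpha_n\}$ of distinct elements of a finite field $F\supseteq GF(q)$ and a polynomial $P\in F[x]$ with $P(\alpha_k)\neq0$ for all $k$, the $q$-ary Goppa code is $\Gamma(L,P)=\{c\in GF(q)^n:\ \sum_k \frac{c_k}{x-\alpha_k}\equiv 0 \pmod{P(x)}\}$. A Goppa code $\Gamma(L,G^j)$ with $G$ separable is called cumulative-separable; a Goppa code with Goppa polynomial $(x-\beta)^j$ is called cumulative. *)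

theory Defs
  imports "HOL-Computational_Algebra.Computational_Algebra"
begin

definition is_subfield :: "'a::field set \<Rightarrow> bool" where
  "is_subfield K \<longleftrightarrow> 0 \<in> K \<and> 1 \<in> K \<and>
     (\<forall>x\<in>K. \<forall>y\<in>K. x + y \<in> K \<and> x * y \<in> K) \<and>
     (\<forall>x\<in>K. - x \<in> K) \<and> (\<forall>x\<in>K. x \<noteq> 0 \<longrightarrow> inverse x \<in> K)"

definition poly_over :: "'a::zero set \<Rightarrow> 'a poly \<Rightarrow> bool" where
  "poly_over K P \<longleftrightarrow> (\<forall>i. coeff P i \<in> K)"

definition separable_poly :: "'a::field poly \<Rightarrow> bool" where
  "separable_poly G \<longleftrightarrow> coprime G (pderiv G)"

text \<open>The q-ary Goppa code Gamma(L,P): L is the list (alpha_1,...,alpha_n) of support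
  elements in the field F, K is the subfield GF(q), and a word c in K^n is a codeword iff
  sum_k c_k / (x - alpha_k) = 0 mod P, where 1/(x - alpha_k) denotes the inverse of
  (x - alpha_k) modulo P (which exists when P(alpha_k) \<noteq> 0).\<close>
definition goppa_code :: "'a::field set \<Rightarrow> 'a list \<Rightarrow> 'a poly \<Rightarrow> 'a list set" where
  "goppa_code K L P = {c. length c = length L \<and> set c \<subseteq> K \<and>
     (\<exists>u :: nat \<Rightarrow> 'a poly.
        (\<forall>k < length L. ([:- (L ! k), 1:] * u k) mod P = 1 mod P) \<and>
        P dvd (\<Sum>k < length L. smult (c ! k) (u k)))}"

end

theory Submission
  imports Defs
begin

lemma lin_not_unit: "\<not> is_unit [:- (c::'a::field), 1:]"
  using is_unit_iff_degree[of "[:- c, 1:]"] by auto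

lemma sep_inj:
  fixes \<beta> :: "nat \<Rightarrow> 'a::field"
  assumes fin: "finite A" and sep: "separable_poly G"
    and G: "G = (\<Prod>i\<in>A. [:- \<beta> i, 1:])"
  shows "inj_on \<beta> A"
proof (rule inj_onI, rule ccontr)
  fix a b assume a: "a \<in> A" and b: "b \<in> A" and eq: "\<beta> a = \<beta> b" and ne: "a \<noteq> b"
  define c where "c = \<beta> a"
  define R where "R = (\<Prod>i\<in>A - {a} - {b}. [:- \<beta> i, 1:])"
  have "G = [:- \<beta> a, 1:] * (\<Prod>i\<in>A - {a}. [:- \<beta> i, 1:])"
    using G fin a by (simp add: prod.remove)
  also have "(\<Prod>i\<in>A - {a}. [:- \<beta> i, 1:]) = [:- \<beta> b, 1:] * R"
    unfolding R_def using fin b ne by (subst prod.remove[of _ b]) auto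
  finally have G1: "G = [:- \<beta> a, 1:] * ([:- \<beta> b, 1:] * R)" .
  have GG: "G = [:- c, 1:] ^ 2 * R"
    unfolding G1 power2_eq_square c_def eq by (simp only: mult.assoc)
  define X where "X = [:- c, 1:]"
  have GX: "G = X ^ 2 * R" using GG unfolding X_def .
  have pd: "pderiv G = X ^ 2 * pderiv R + R * pderiv (X ^ 2)"
    unfolding GX by (rule pderiv_mult)
  have "X dvd smult (of_nat (Suc 1)) (X ^ 1)" by (rule dvd_smult) simp
  then have "X dvd smult (of_nat (Suc 1)) (X ^ 1) * pderiv X" by (rule dvd_mult2)
  then have "X dvd pderiv (X ^ Suc 1)" unfolding pderiv_power_Suc .
  moreover have "(2::nat) = Suc 1" by simp
  ultimately have "X dvd pderiv (X ^ 2)" by metis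
  then have x2: "X dvd R * pderiv (X ^ 2)" by (rule dvd_mult)
  have x1: "X dvd X ^ 2 * pderiv R" unfolding power2_eq_square mult.assoc by (rule dvd_triv_left)
  have d1: "[:- c, 1:] dvd pderiv G" unfolding pd X_def[symmetric] using x1 x2 by (rule dvd_add)
  have d2: "[:- c, 1:] dvd G" unfolding GG power2_eq_square mult.assoc by (rule dvd_triv_left)
  have "coprime G (pderiv G)" using sep unfolding separable_poly_def .
  then have "is_unit [:- c, 1:]" using d1 d2 coprime_common_divisor by blast
  then show False using lin_not_unit by blast
qed

lemma pow_dvd_cancel:
  fixes Q t :: "'a::field poly"
  assumes "poly Q b \<noteq> 0"
  shows "[:- b, 1:] ^ j dvd Q * t \<Longrightarrow> [:- b, 1:] ^ j dvd t"
proof (induction j arbitrary: t)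
  case 0 then show ?case by simp
next
  case (Suc j)
  have "[:- b, 1:] dvd [:- b, 1:] ^ Suc j" unfolding power_Suc by (rule dvd_triv_left)
  then have "[:- b, 1:] dvd Q * t" using Suc.prems dvd_trans by blast
  then have "poly (Q * t) b = 0" using poly_eq_0_iff_dvd by blast
  then have "poly t b = 0" using assms by simp
  then obtain t' where t': "t = [:- b, 1:] * t'" using poly_eq_0_iff_dvd by (metis dvdE)
  have e1: "Q * t = [:- b, 1:] * (Q * t')" unfolding t' by (rule mult.left_commute)
  have "[:- b, 1:] * [:- b, 1:] ^ j dvd [:- b, 1:] * (Q * t')"
    using Suc.prems unfolding e1 power_Suc .
  moreover have nz: "[:- b, 1:] \<noteq> 0" by simp
  ultimately have "[:- b, 1:] ^ j dvd Q * t'"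
    by (simp only: dvd_mult_cancel_left) blast
  then have "[:- b, 1:] ^ j dvd t'" by (rule Suc.IH)
  then show ?case unfolding t' power_Suc by (rule mult_dvd_mono[OF dvd_refl])
qed

lemma prod_dvd_lin:
  fixes \<beta> :: "nat \<Rightarrow> 'a::field"
  assumes "finite A" "inj_on \<beta> A" "\<And>i. i \<in> A \<Longrightarrow> [:- \<beta> i, 1:] ^ j dvd s"
  shows "(\<Prod>i\<in>A. [:- \<beta> i, 1:] ^ j) dvd s"
  using assms
proof (induction A rule: finite_induct)
  case empty then show ?case by simp
next
  case (insert x F)
  have "(\<Prod>i\<in>F. [:- \<beta> i, 1:] ^ j) dvd s" using insert by auto
  then obtain t where t: "s = (\<Prod>i\<in>F. [:- \<beta> i, 1:] ^ j) * t" by (metis dvdE)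
  have ne: "\<beta> x \<noteq> \<beta> i" if "i \<in> F" for i
  proof
    assume "\<beta> x = \<beta> i"
    then have "x = i" using insert.prems(1) \<open>i \<in> F\<close> by (auto dest: inj_onD)
    then show False using insert.hyps(2) \<open>i \<in> F\<close> by simp
  qed
  have "poly (\<Prod>i\<in>F. [:- \<beta> i, 1:] ^ j) (\<beta> x) \<noteq> 0"
    using insert.hyps(1) ne by (simp add: poly_prod prod_zero_iff)
  moreover have "[:- \<beta> x, 1:] ^ j dvd (\<Prod>i\<in>F. [:- \<beta> i, 1:] ^ j) * t"
    using insert.prems(2) t by auto
  ultimately have "[:- \<beta> x, 1:] ^ j dvd t" by (rule pow_dvd_cancel)
  then show ?case using insert.hyps t by (simp add: mult_dvd_mono)
qed

lemma inv_exists: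
  fixes P :: "'a::field poly"
  assumes "poly P a \<noteq> 0"
  shows "\<exists>u. P dvd [:- a, 1:] * u - 1"
proof -
  define pa where "pa = poly P a"
  have h: "[:- a, 1:] * synthetic_div P a = P - [:pa:]"
    using synthetic_div_correct'[of a P] unfolding pa_def by (simp add: algebra_simps)
  have "[:- a, 1:] * smult (- inverse pa) (synthetic_div P a) - 1
        = smult (- inverse pa) ([:- a, 1:] * synthetic_div P a) - 1" by simp
  also have "\<dots> = smult (- inverse pa) P + smult (inverse pa) [:pa:] - 1"
    unfolding h by (simp add: smult_diff_right)
  also have "smult (inverse pa) [:pa:] = 1" using assms pa_def by (simp add: one_pCons)
  finally have "[:- a, 1:] * smult (- inverse pa) (synthetic_div P a) - 1 = smult (- inverse pa) P"
    by simp
  then show ?thesis by (metis dvd_smult dvd_refl)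
qed

lemma diff_aux: "(A * u - 1) - (A * v - 1) = A * (u - v)" for A u v :: "'a::comm_ring_1"
  by (simp add: algebra_simps)

lemma inv_unique:
  fixes u v :: "'a::field poly"
  assumes "a \<noteq> b" "[:- b, 1:] ^ j dvd [:- a, 1:] * u - 1" "[:- b, 1:] ^ j dvd [:- a, 1:] * v - 1"
  shows "[:- b, 1:] ^ j dvd u - v"
proof -
  have "[:- b, 1:] ^ j dvd ([:- a, 1:] * u - 1) - ([:- a, 1:] * v - 1)"
    using assms(2,3) by (rule dvd_diff)
  then have "[:- b, 1:] ^ j dvd [:- a, 1:] * (u - v)" unfolding diff_aux .
  moreover have "poly [:- a, 1:] b \<noteq> 0" using assms(1) by simp
  ultimately show ?thesis using pow_dvd_cancel by blast
qed

lemma goppa_alt: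
  "goppa_code K L P = {c. length c = length L \<and> set c \<subseteq> K \<and>
     (\<exists>u :: nat \<Rightarrow> 'a::field poly.
        (\<forall>k < length L. P dvd [:- (L ! k), 1:] * u k - 1) \<and>
        P dvd (\<Sum>k < length L. smult (c ! k) (u k)))}"
  unfolding goppa_code_def by (simp add: mod_eq_dvd_iff)

theorem corollary2:
  fixes K E :: "'a::{field,finite} set"
    and q m j \<tau> :: nat
    and G :: "'a poly"
    and \<beta> :: "nat \<Rightarrow> 'a"
    and L :: "'a list"
  assumes q_pp: "\<exists>p k. prime p \<and> 0 < k \<and> q = p ^ k"
    and m: "1 \<le> m" and j: "1 \<le> j"
    and K: "is_subfield K" "card K = q"
    and E: "is_subfield E" "card E = q ^ m" "K \<subseteq> E"
    and G_over: "poly_over E G"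
    and G_sep: "separable_poly G"
    and G_deg: "degree G = \<tau>" and tau: "0 < \<tau>"
    and G_fact: "G = (\<Prod>i\<in>{1..\<tau>}. [:- \<beta> i, 1:])"
    and L_dist: "distinct L" and L_E: "set L \<subseteq> E"
    and L_nonroot: "\<forall>a\<in>set L. poly G a \<noteq> 0"
  shows "goppa_code K L (G ^ j) = (\<Inter>i\<in>{1..\<tau>}. goppa_code K L ([:- \<beta> i, 1:] ^ j))"

proof -
  define n where "n = length L"
  have inj: "inj_on \<beta> {1..\<tau>}" using sep_inj[OF _ G_sep G_fact] by simp
  have Gj: "G ^ j = (\<Prod>i\<in>{1..\<tau>}. [:- \<beta> i, 1:] ^ j)"
    using G_fact by (simp add: prod_power_distrib)
  have dvdG: "[:- \<beta> i, 1:] ^ j dvd G ^ j" if "i \<in> {1..\<tau>}" for i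
    unfolding Gj using that by (intro dvd_prodI) auto
  have ab: "L ! k \<noteq> \<beta> i" if "k < n" "i \<in> {1..\<tau>}" for k i
  proof
    assume "L ! k = \<beta> i"
    then have "poly G (L ! k) = 0" unfolding G_fact using that(2)
      by (auto simp: poly_prod prod_zero_iff)
    then show False using L_nonroot that(1) n_def by auto
  qed
  show ?thesis
  proof (rule set_eqI, rule iffI)
    fix c assume "c \<in> goppa_code K L (G ^ j)"
    then obtain u where c: "length c = n" "set c \<subseteq> K"
      and u: "\<forall>k < n. G ^ j dvd [:- (L ! k), 1:] * u k - 1"
      and s: "G ^ j dvd (\<Sum>k < n. smult (c ! k) (u k))"
      unfolding goppa_alt n_def by blast
    show "c \<in> (\<Inter>i\<in>{1..\<tau>}. goppa_code K L ([:- \<beta> i, 1:] ^ j))"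
    proof
      fix i assume i: "i \<in> {1..\<tau>}"
      show "c \<in> goppa_code K L ([:- \<beta> i, 1:] ^ j)"
        unfolding goppa_alt n_def[symmetric]
      proof (intro CollectI conjI exI[of _ u] allI impI)
        fix k assume "k < n"
        then show "[:- \<beta> i, 1:] ^ j dvd [:- (L ! k), 1:] * u k - 1"
          using u dvdG[OF i] by (meson dvd_trans)
      qed (use c s dvdG[OF i] in \<open>auto intro: dvd_trans[OF dvdG[OF i] s]\<close>)
    qed
  next
    fix c assume "c \<in> (\<Inter>i\<in>{1..\<tau>}. goppa_code K L ([:- \<beta> i, 1:] ^ j))"
    then have ci: "\<And>i. i \<in> {1..\<tau>} \<Longrightarrow> c \<in> goppa_code K L ([:- \<beta> i, 1:] ^ j)" by blast
    have c: "length c = n" "set c \<subseteq> K" using ci[of 1] tau unfolding goppa_alt n_def by auto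
    have ex: "\<exists>w. G ^ j dvd [:- (L ! k), 1:] * w - 1" if "k < n" for k
      by (rule inv_exists) (use L_nonroot that n_def in simp)
    have "\<forall>k. \<exists>w. k < n \<longrightarrow> G ^ j dvd [:- (L ! k), 1:] * w - 1"
      using ex by blast
    then obtain u where u: "\<And>k. k < n \<Longrightarrow> G ^ j dvd [:- (L ! k), 1:] * u k - 1" by metis
    have "(\<Prod>i\<in>{1..\<tau>}. [:- \<beta> i, 1:] ^ j) dvd (\<Sum>k < n. smult (c ! k) (u k))"
    proof (rule prod_dvd_lin[OF _ inj])
      fix i assume i: "i \<in> {1..\<tau>}"
      from ci[OF i] obtain v where
        v: "\<forall>k < n. [:- \<beta> i, 1:] ^ j dvd [:- (L ! k), 1:] * v k - 1"
        and sv: "[:- \<beta> i, 1:] ^ j dvd (\<Sum>k < n. smult (c ! k) (v k))"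
        unfolding goppa_alt n_def by blast
      have uv: "[:- \<beta> i, 1:] ^ j dvd u k - v k" if k: "k < n" for k
        using inv_unique[OF ab[OF k i] dvd_trans[OF dvdG[OF i] u[OF k]]] v k by blast
      have "(\<Sum>k < n. smult (c ! k) (u k)) - (\<Sum>k < n. smult (c ! k) (v k))
            = (\<Sum>k < n. smult (c ! k) (u k - v k))"
        by (simp add: sum_subtractf smult_diff_right)
      moreover have "[:- \<beta> i, 1:] ^ j dvd (\<Sum>k < n. smult (c ! k) (u k - v k))"
        using uv by (intro dvd_sum) (simp add: dvd_smult)
      ultimately have "[:- \<beta> i, 1:] ^ j dvd (\<Sum>k < n. smult (c ! k) (u k)) - (\<Sum>k < n. smult (c ! k) (v k))"
        by simp
      then show "[:- \<beta> i, 1:] ^ j dvd (\<Sum>k < n. smult (c ! k) (u k))"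
        using sv by (metis diff_add_cancel dvd_add)
    qed simp
    then show "c \<in> goppa_code K L (G ^ j)"
      unfolding goppa_alt n_def[symmetric] Gj[symmetric] using c u by blast
  qed
qed

end
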